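(* Let $Q\in\mathbb{N}$, $\mathcal{S}\subseteq B(0,Q^{1/2})\cap(\mathbb{Z}[i]\setminus\{0\})$, $0<\Delta\le1/2$ and $\tau=\Delta^{-1/4}$. Define $K(\Delta)$ and $P(\alpha)$ as in the context. Then $$K(\Delta)\le 4\sup_{\substack{r\in\mathbb{Z}[i]\\ 1\le|r|\le\tau}}\ \sup_{\substack{b\in\mathbb{Z}[i]\\ (b,r)=1}}\ \sup_{\substack{z\in\mathbb{C}\\ \Delta^{1/2}\le|z|\le\frac{2}{|r|\tau}}} P\Big(\frac{b}{r}+z\Big).$$
   Context: $\mathbb{Z}[i]$ are the Gaussian integers, $\mathcal{N}(q)=\Re(q)^2+\Im(q)^2$, $B(y,u)=\{w\in\mathbb{C}:|w-y|\le u\}$. For each $q$ let $\mathcal{R}_q$ be a complete system of representatives of the residue classes modulo $q$ in $\mathbb{Z}[i]$ coprime to $q$. Define $$K(\Delta)=\sup_{\alpha\in\mathbb{C}}\Big|\Big\{(a,q):\ q\in\mathcal{S},\ a\in\mathcal{R}_q,\ \min_{w\in\mathbb{Z}[i]}\Big|\frac{\overline{a}}{\overline{q}}-\alpha-w\Big|\le\Delta^{1/2}\Big\}\Big|,$$ and for $\alpha\in\mathbb{C}$, $$P(\alpha)=\Big|\Big\{(a,q)\in\mathbb{Z}[i]\times\mathcal{S}:\ (a,q)=1,\ \Big|\frac{a}{q}-\alpha\Big|\le\Delta^{1/2}\Big\}\Big|.$$ *)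

theory Defs
  imports "HOL-Analysis.Analysis"
begin

definition ZI :: "complex set" where
  "ZI = {z. Re z \<in> \<int> \<and> Im z \<in> \<int>}"

definition gdvd :: "complex \<Rightarrow> complex \<Rightarrow> bool" where
  "gdvd d a \<longleftrightarrow> (\<exists>c\<in>ZI. a = d * c)"

definition gcoprime :: "complex \<Rightarrow> complex \<Rightarrow> bool" where
  "gcoprime a b \<longleftrightarrow> (\<forall>d\<in>ZI. gdvd d a \<and> gdvd d b \<longrightarrow> cmod d = 1)"

definition reduced_residue_system :: "complex \<Rightarrow> complex set \<Rightarrow> bool" where
  "reduced_residue_system q R \<longleftrightarrow>
     R \<subseteq> ZI \<and> (\<forall>a\<in>R. gcoprime a q) \<and>
     (\<forall>a\<in>ZI. gcoprime a q \<longrightarrow> (\<exists>!r. r \<in> R \<and> gdvd q (a - r)))"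

definition Kfun :: "complex set \<Rightarrow> (complex \<Rightarrow> complex set) \<Rightarrow> real \<Rightarrow> real" where
  "Kfun S R \<Delta> = (SUP \<alpha>\<in>(UNIV::complex set).
     real (card {(a, q). q \<in> S \<and> a \<in> R q \<and>
        (\<exists>w\<in>ZI. cmod (cnj a / cnj q - \<alpha> - w) \<le> sqrt \<Delta>)}))"

definition Pfun :: "complex set \<Rightarrow> real \<Rightarrow> complex \<Rightarrow> nat" where
  "Pfun S \<Delta> \<alpha> = card {(a, q). a \<in> ZI \<and> q \<in> S \<and> gcoprime a q \<and>
        cmod (a / q - \<alpha>) \<le> sqrt \<Delta>}"

end

theory Submission
  imports Defs
begin


lemma ZI_iff: "z \<in> ZI \<longleftrightarrow> (\<exists>x y::int. z = Complex (of_int x) (of_int y))"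
  unfolding ZI_def by (auto elim!: Ints_cases simp: complex_eq_iff)

lemma ZI_Complex[simp]: "Complex (of_int x) (of_int y) \<in> ZI"
  by (auto simp: ZI_iff)

lemma ZI_add[intro]: "a \<in> ZI \<Longrightarrow> b \<in> ZI \<Longrightarrow> a + b \<in> ZI"
  unfolding ZI_def by auto
lemma ZI_diff[intro]: "a \<in> ZI \<Longrightarrow> b \<in> ZI \<Longrightarrow> a - b \<in> ZI"
  unfolding ZI_def by auto
lemma ZI_mult[intro]: "a \<in> ZI \<Longrightarrow> b \<in> ZI \<Longrightarrow> a * b \<in> ZI"
  unfolding ZI_def by auto
lemma ZI_cnj[intro]: "a \<in> ZI \<Longrightarrow> cnj a \<in> ZI"
  unfolding ZI_def by auto
lemma ZI_1[simp]: "1 \<in> ZI" and ZI_0[simp]: "0 \<in> ZI"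
  unfolding ZI_def by auto

lemma ZI_norm_ge1: assumes "z \<in> ZI" "z \<noteq> 0" shows "1 \<le> cmod z"
proof -
  obtain x y :: int where z: "z = Complex x y" using assms ZI_iff by blast
  have "x \<noteq> 0 \<or> y \<noteq> 0" using assms z by (auto simp: Complex_eq_0)
  hence "1 \<le> x^2 + y^2" by (smt (verit) power2_less_eq_zero_iff zero_le_power2 zero_less_iff_neq_zero)
  hence "(1::real) \<le> of_int (x^2 + y^2)" by (metis of_int_1 of_int_le_iff)
  hence "(1::real) \<le> of_int x ^2 + of_int y ^2" by simp
  thus ?thesis by (simp add: z cmod_def)
qed

lemma gcoprime_1: "gcoprime b 1"
  unfolding gcoprime_def gdvd_def
proof (intro ballI impI, elim conjE bexE)
  fix d c1 c2 assume d: "d \<in> ZI" and c: "c2 \<in> ZI" "1 = d * c2"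
  hence "d \<noteq> 0" "c2 \<noteq> 0" by auto
  hence "1 \<le> cmod d" "1 \<le> cmod c2" using ZI_norm_ge1 d c by auto
  moreover have "cmod d * cmod c2 = 1" using c(2) by (metis norm_mult norm_one)
  ultimately show "cmod d = 1"
    using mult_left_mono[of 1 "cmod c2" "cmod d"] by auto
qed

lemma gcoprime_shift: assumes "gcoprime a q" "c \<in> ZI" shows "gcoprime (a - q * c) q"
  unfolding gcoprime_def
proof (intro ballI impI, elim conjE)
  fix d assume d: "d \<in> ZI" and h1: "gdvd d (a - q * c)" and h2: "gdvd d q"
  obtain e1 where e1: "e1 \<in> ZI" "a - q * c = d * e1" using h1 unfolding gdvd_def by auto
  obtain e2 where e2: "e2 \<in> ZI" "q = d * e2" using h2 unfolding gdvd_def by auto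
  have "a = d * (e1 + e2 * c)" using e1 e2 by (simp add: algebra_simps)
  hence "gdvd d a" unfolding gdvd_def using e1 e2 assms(2) by blast
  thus "cmod d = 1" using assms(1) d h2 unfolding gcoprime_def by blast
qed



lemma finite_ZI_ball: "finite (ZI \<inter> cball 0 \<rho>)"
proof -
  define N where "N = \<lceil>\<rho>\<rceil>"
  have "ZI \<inter> cball 0 \<rho> \<subseteq> (\<lambda>(x,y). Complex (of_int x) (of_int y)) ` ({-N..N} \<times> {-N..N})"
  proof
    fix z assume z: "z \<in> ZI \<inter> cball 0 \<rho>"
    then obtain x y :: int where zz: "z = Complex x y" using ZI_iff by blast
    have "\<bar>Re z\<bar> \<le> \<rho>" "\<bar>Im z\<bar> \<le> \<rho>" using z abs_Re_le_cmod abs_Im_le_cmod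
      by (auto intro: order_trans)
    hence "\<bar>x\<bar> \<le> N" "\<bar>y\<bar> \<le> N" unfolding N_def using zz
      by (simp_all add: abs_le_iff le_ceiling_iff) linarith+
    thus "z \<in> (\<lambda>(x,y). Complex (of_int x) (of_int y)) ` ({-N..N} \<times> {-N..N})"
      using zz by (auto simp: abs_le_iff intro!: image_eqI[of _ _ "(x,y)"])
  qed
  thus ?thesis by (rule finite_subset) auto
qed

definition Pset :: "complex set \<Rightarrow> real \<Rightarrow> complex \<Rightarrow> (complex \<times> complex) set" where
  "Pset S \<Delta> \<alpha> = {(a, q). a \<in> ZI \<and> q \<in> S \<and> gcoprime a q \<and> cmod (a / q - \<alpha>) \<le> sqrt \<Delta>}"

lemma Pfun_Pset: "Pfun S \<Delta> \<alpha> = card (Pset S \<Delta> \<alpha>)"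
  unfolding Pfun_def Pset_def ..

definition Dset :: "real \<Rightarrow> real \<Rightarrow> complex set" where
  "Dset M s = ZI \<inter> cball 0 (M * s + 2)"

lemma Pset_sub:
  assumes S: "S \<subseteq> cball 0 M \<inter> (ZI - {0})" and D: "0 < \<Delta>"
  shows "Pset S \<Delta> \<alpha> \<subseteq> (\<lambda>(w,q). (w + Complex \<lfloor>Re (q*\<alpha>)\<rfloor> \<lfloor>Im (q*\<alpha>)\<rfloor>, q)) ` (Dset M (sqrt \<Delta>) \<times> S)"
proof
  fix p assume p: "p \<in> Pset S \<Delta> \<alpha>"
  obtain a q where pq: "p = (a,q)" by fastforce
  define g where "g = Complex \<lfloor>Re (q*\<alpha>)\<rfloor> \<lfloor>Im (q*\<alpha>)\<rfloor>"
  have a: "a \<in> ZI" and q: "q \<in> S" and d: "cmod (a / q - \<alpha>) \<le> sqrt \<Delta>"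
    using p pq unfolding Pset_def by auto
  have q0: "q \<noteq> 0" and qM: "cmod q \<le> M" using q S by auto
  have "a - q * \<alpha> = q * (a / q - \<alpha>)" using q0 by (simp add: field_simps)
  hence "cmod (a - q*\<alpha>) = cmod q * cmod (a / q - \<alpha>)" by (simp add: norm_mult)
  also have "\<dots> \<le> M * sqrt \<Delta>" using qM d by (simp add: mult_mono')
  finally have h1: "cmod (a - q*\<alpha>) \<le> M * sqrt \<Delta>" .
  have "cmod (q*\<alpha> - g) \<le> \<bar>Re (q*\<alpha> - g)\<bar> + \<bar>Im (q*\<alpha> - g)\<bar>" by (rule cmod_le)
  also have "\<dots> \<le> 2" unfolding g_def by simp linarith
  finally have h2: "cmod (q*\<alpha> - g) \<le> 2" .
  have "cmod (a - g) \<le> cmod (a - q*\<alpha>) + cmod (q*\<alpha> - g)"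
    by (metis diff_add_cancel add_diff_eq norm_triangle_ineq)
  hence "cmod (a - g) \<le> M * sqrt \<Delta> + 2" using h1 h2 by linarith
  moreover have "a - g \<in> ZI" using a unfolding g_def by (intro ZI_diff) auto
  ultimately have "a - g \<in> Dset M (sqrt \<Delta>)" unfolding Dset_def by auto
  thus "p \<in> (\<lambda>(w,q). (w + Complex \<lfloor>Re (q*\<alpha>)\<rfloor> \<lfloor>Im (q*\<alpha>)\<rfloor>, q)) ` (Dset M (sqrt \<Delta>) \<times> S)"
    using q pq unfolding g_def by (auto intro!: image_eqI[of _ _ "(a - g, q)"] simp: g_def)
qed

lemma finite_S: assumes S: "S \<subseteq> cball 0 M \<inter> (ZI - {0})" shows "finite S"
  using finite_subset[OF _ finite_ZI_ball[of M]] S by auto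

lemma Pset_finite_bound:
  assumes S: "S \<subseteq> cball 0 M \<inter> (ZI - {0})" and D: "0 < \<Delta>"
  shows "finite (Pset S \<Delta> \<alpha>)" "card (Pset S \<Delta> \<alpha>) \<le> card (Dset M (sqrt \<Delta>)) * card S"
proof -
  have fin: "finite (Dset M (sqrt \<Delta>) \<times> S)" using finite_S[OF S] finite_ZI_ball
    unfolding Dset_def by auto
  show "finite (Pset S \<Delta> \<alpha>)" using finite_subset[OF Pset_sub[OF S D] finite_imageI[OF fin]] .
  have "card (Pset S \<Delta> \<alpha>) \<le> card ((\<lambda>(w,q). (w + Complex \<lfloor>Re (q*\<alpha>)\<rfloor> \<lfloor>Im (q*\<alpha>)\<rfloor>, q)) ` (Dset M (sqrt \<Delta>) \<times> S))"
    by (rule card_mono[OF finite_imageI[OF fin] Pset_sub[OF S D]])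
  also have "\<dots> \<le> card (Dset M (sqrt \<Delta>) \<times> S)" by (rule card_image_le[OF fin])
  finally show "card (Pset S \<Delta> \<alpha>) \<le> card (Dset M (sqrt \<Delta>)) * card S" by (simp add: card_cartesian_product)
qed



lemma flower_real:
  fixes x y d s :: real
  assumes "0 \<le> d" "d < s" "(x-d)^2 + y^2 \<le> s^2"
  shows "x^2+y^2 \<le> 2 * s * x \<or> x^2+y^2 \<le> -2 * s * x \<or> x^2+y^2 \<le> 2 * s * y \<or> x^2+y^2 \<le> -2 * s * y"
proof (rule ccontr)
  define R where "R = x^2+y^2"
  assume "\<not> ?thesis"
  hence h: "R > 2 * s * \<bar>x\<bar>" "R > 2 * s * \<bar>y\<bar>" unfolding R_def by (auto simp: abs_if split: if_splits)
  have s0: "s > 0" using assms by linarith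
  have R0: "R > 0" using h s0 by (smt (verit) mult_nonneg_nonneg abs_ge_zero)
  have "R^2 > (2 * s * \<bar>x\<bar>)^2" using h s0 by (intro power_strict_mono) auto
  hence hx: "R^2 > 4* s^2*x^2" by (simp add: power_mult_distrib)
  have "R^2 > (2 * s * \<bar>y\<bar>)^2" using h s0 by (intro power_strict_mono) auto
  hence hy: "R^2 > 4* s^2*y^2" by (simp add: power_mult_distrib)
  have "2*R^2 > 4* s^2*R" using hx hy unfolding R_def by (simp add: algebra_simps)
  hence "2*R*R > 2*R*(2* s^2)" by (simp add: power2_eq_square algebra_simps)
  hence R2: "R > 2* s^2" using R0 by (simp add: mult_less_cancel_left_pos)
  have e: "R \<le> 2*d*x + s^2 - d^2" using assms(3) unfolding R_def by (simp add: power2_diff algebra_simps)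
  show False
  proof (cases "x \<le> 0")
    case True
    hence "2*d*x \<le> 0" using assms(1) by (simp add: mult_nonneg_nonpos)
    hence "R \<le> s^2" using e by (smt (verit) zero_le_power2)
    thus False using R2 by (smt (verit) zero_le_power2)
  next
    case False
    hence "2 * s * x < 2*d*x + s^2 - d^2" using e h(1) by simp
    hence "2*x*(s-d) < (s+d)*(s-d)" by (simp add: algebra_simps power2_eq_square)
    moreover have sd: "s - d > 0" using assms(2) by simp
    ultimately have x1: "2*x < s+d" using mult_less_cancel_right_pos[OF sd, of "2*x" "s+d"] by simp
    have "d*(2*x) \<le> d*(s+d)" using mult_left_mono[OF less_imp_le[OF x1] assms(1)] .
    hence "2*d*x \<le> d*(s+d)" by (simp add: algebra_simps)
    hence "R \<le> d* s + s^2" using e by (simp add: algebra_simps power2_eq_square)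
    moreover have "d* s \<le> s^2" using assms by (simp add: power2_eq_square mult_right_mono)
    ultimately show False using R2 by linarith
  qed
qed

lemma cmod_le_iff_sq: "0 \<le> s \<Longrightarrow> cmod z \<le> s \<longleftrightarrow> Re z^2 + Im z^2 \<le> s^2"
  unfolding cmod_def using real_le_lsqrt sqrt_le_D by blast

lemma flower:
  fixes s :: real and v p c u :: complex
  defines "u \<equiv> (if v = 0 then 1 else v / cmod v)"
  assumes s: "s > 0" and v: "cmod v < s" and p: "cmod (p - (c + v)) \<le> s"
  shows "\<exists>z \<in> {s * u, \<i> * s * u, -(s * u), -(\<i> * s * u)}. cmod (p - (c + z)) \<le> s"
proof -
  have u1: "cmod u = 1" unfolding u_def by (auto simp: norm_divide)
  have uu: "u * cnj u = 1" using complex_norm_square[of u] u1 by simp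
  define w where "w = (p - c) * cnj u"
  define d where "d = cmod v"
  have vd: "v * cnj u = d"
  proof (cases "v = 0")
    case False
    have "v * cnj u = (v * cnj v) / of_real (cmod v)" unfolding u_def using False by simp
    also have "v * cnj v = of_real (cmod v) * of_real (cmod v)" using complex_norm_square[of v]
      by (simp add: power2_eq_square)
    also have "\<dots> / of_real (cmod v) = of_real (cmod v)" using False by simp
    finally show ?thesis unfolding d_def .
  qed (simp add: d_def)
  have key: "cmod (p - (c + z)) = cmod (w - z * cnj u)" for z
  proof -
    have "w - z * cnj u = (p - (c + z)) * cnj u" unfolding w_def by (simp add: algebra_simps)
    thus ?thesis using u1 by (simp add: norm_mult)
  qed
  have "cmod (w - d) \<le> s" using key[of v] p vd by simp
  hence A: "(Re w - d)^2 + (Im w)^2 \<le> s^2" using s by (simp add: cmod_le_iff_sq)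
  have "0 \<le> d" "d < s" using v unfolding d_def by auto
  from flower_real[OF this A] have F: "(Re w)^2+(Im w)^2 \<le> 2 * s * Re w \<or> (Re w)^2+(Im w)^2 \<le> -2 * s * Re w \<or>
     (Re w)^2+(Im w)^2 \<le> 2 * s * Im w \<or> (Re w)^2+(Im w)^2 \<le> -2 * s * Im w" .
  have e1: "cmod (p - (c + s * u)) = cmod (w - of_real s)"
    using key[of "s * u"] by (simp add: mult.assoc uu)
  have e2: "cmod (p - (c + -(s * u))) = cmod (w + of_real s)"
    using key[of "-(s * u)"] by (simp add: mult.assoc uu)
  have e3: "cmod (p - (c + \<i> * s * u)) = cmod (w - \<i> * of_real s)"
    using key[of "\<i> * s * u"] by (simp add: mult.assoc uu)
  have e4: "cmod (p - (c + -(\<i> * s * u))) = cmod (w + \<i> * of_real s)"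
    using key[of "-(\<i> * s * u)"] by (simp add: mult.assoc uu)
  have z1: "cmod (p - (c + s * u)) \<le> s \<longleftrightarrow> (Re w)^2+(Im w)^2 \<le> 2 * s * Re w"
    unfolding e1 using s by (simp add: cmod_le_iff_sq power2_diff algebra_simps)
  have z2: "cmod (p - (c + -(s * u))) \<le> s \<longleftrightarrow> (Re w)^2+(Im w)^2 \<le> -2 * s * Re w"
    unfolding e2 using s by (simp add: cmod_le_iff_sq power2_sum algebra_simps; linarith)
  have z3: "cmod (p - (c + \<i> * s * u)) \<le> s \<longleftrightarrow> (Re w)^2+(Im w)^2 \<le> 2 * s * Im w"
    unfolding e3 using s by (simp add: cmod_le_iff_sq power2_diff algebra_simps)
  have z4: "cmod (p - (c + -(\<i> * s * u))) \<le> s \<longleftrightarrow> (Re w)^2+(Im w)^2 \<le> -2 * s * Im w"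
    unfolding e4 using s by (simp add: cmod_le_iff_sq power2_sum algebra_simps; linarith)
  show ?thesis using F z1 z2 z3 z4 by blast
qed



lemma floor_eq_diff: "\<lfloor>a::real\<rfloor> = \<lfloor>b\<rfloor> \<Longrightarrow> \<bar>a - b\<bar> < 1"
proof -
  assume h: "\<lfloor>a::real\<rfloor> = \<lfloor>b\<rfloor>"
  have "of_int \<lfloor>a\<rfloor> \<le> a" "a < of_int \<lfloor>a\<rfloor> + 1" "of_int \<lfloor>b\<rfloor> \<le> b" "b < of_int \<lfloor>b\<rfloor> + 1"
    by linarith+
  thus ?thesis using h by (simp add: abs_less_iff) linarith
qed

lemma frac_close:
  fixes m :: nat and a b :: real
  assumes "m > 0" "nat \<lfloor>m * frac a\<rfloor> = nat \<lfloor>m * frac b\<rfloor>"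
  shows "\<bar>frac a - frac b\<bar> < 1 / m"
proof -
  have "0 \<le> \<lfloor>m * frac a\<rfloor>" "0 \<le> \<lfloor>m * frac b\<rfloor>" by (simp_all add: frac_ge_0)
  hence "\<lfloor>m * frac a\<rfloor> = \<lfloor>m * frac b\<rfloor>" using assms(2) by (simp add: eq_nat_nat_iff)
  hence "\<bar>m * frac a - m * frac b\<bar> < 1" by (rule floor_eq_diff)
  moreover have "m * frac a - m * frac b = real m * (frac a - frac b)" by (simp add: algebra_simps)
  ultimately have "real m * \<bar>frac a - frac b\<bar> < 1" by (simp add: abs_mult)
  hence h: "\<bar>frac a - frac b\<bar> * real m < 1" by (simp only: mult.commute)
  have mp: "real m > 0" using assms(1) by simp
  show ?thesis using h pos_less_divide_eq[OF mp, of "\<bar>frac a - frac b\<bar>" 1] by blast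
qed

lemma nat_floor_frac_lt:
  fixes m :: nat assumes "m > 0" shows "nat \<lfloor>real m * frac x\<rfloor> < m"
proof -
  have "real m * frac x < real m" using assms frac_lt_1[of x] by simp
  hence "\<lfloor>real m * frac x\<rfloor> < int m" by (simp add: floor_less_iff)
  moreover have "0 \<le> \<lfloor>real m * frac x\<rfloor>" by (simp add: frac_ge_0)
  ultimately show ?thesis by (simp add: nat_less_iff)
qed

lemma pigeon:
  fixes Pts :: "(int \<times> int) set" and m1 m2 :: nat and \<beta> :: complex
  assumes fin: "finite Pts" and card: "m1 * m2 < card Pts" and m: "m1 > 0" "m2 > 0"
  shows "\<exists>x1 y1 x2 y2 b. (x1,y1) \<in> Pts \<and> (x2,y2) \<in> Pts \<and> (x1,y1) \<noteq> (x2,y2) \<and> b \<in> ZI \<and>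
     \<bar>Re (Complex (of_int (x1-x2)) (of_int (y1-y2)) * \<beta> - b)\<bar> < 1/m1 \<and>
     \<bar>Im (Complex (of_int (x1-x2)) (of_int (y1-y2)) * \<beta> - b)\<bar> < 1/m2"
proof -
  define P where "P = (\<lambda>(x::int,y::int). Complex (of_int x) (of_int y) * \<beta>)"
  define f where "f = (\<lambda>p. (nat \<lfloor>m1 * frac (Re (P p))\<rfloor>, nat \<lfloor>m2 * frac (Im (P p))\<rfloor>))"
  have sub: "f ` Pts \<subseteq> {..<m1} \<times> {..<m2}"
  proof
    fix t assume "t \<in> f ` Pts"
    then obtain p where t: "t = f p" by auto
    show "t \<in> {..<m1} \<times> {..<m2}" unfolding t f_def using nat_floor_frac_lt m by auto
  qed
  have "\<not> inj_on f Pts"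
  proof
    assume "inj_on f Pts"
    hence "card Pts \<le> card ({..<m1} \<times> {..<m2})" using card_inj_on_le[OF _ sub] by auto
    thus False using card by (simp add: card_cartesian_product)
  qed
  then obtain p q where pq: "p \<in> Pts" "q \<in> Pts" "p \<noteq> q" "f p = f q" unfolding inj_on_def by blast
  obtain x1 y1 where p: "p = (x1,y1)" by fastforce
  obtain x2 y2 where q: "q = (x2,y2)" by fastforce
  define b where "b = Complex (of_int (\<lfloor>Re (P p)\<rfloor> - \<lfloor>Re (P q)\<rfloor>)) (of_int (\<lfloor>Im (P p)\<rfloor> - \<lfloor>Im (P q)\<rfloor>))"
  have rq: "Complex (of_int (x1-x2)) (of_int (y1-y2)) * \<beta> = P p - P q"
    unfolding P_def p q by (simp add: complex_eq_iff algebra_simps)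
  have bZ: "b \<in> ZI" unfolding b_def by (rule ZI_Complex)
  have e1: "Re (P p - P q - b) = frac (Re (P p)) - frac (Re (P q))"
    unfolding b_def frac_def by simp
  have e2: "Im (P p - P q - b) = frac (Im (P p)) - frac (Im (P q))"
    unfolding b_def frac_def by simp
  have f1: "nat \<lfloor>real m1 * frac (Re (P p))\<rfloor> = nat \<lfloor>real m1 * frac (Re (P q))\<rfloor>"
    using pq(4) unfolding f_def by simp
  have f2: "nat \<lfloor>real m2 * frac (Im (P p))\<rfloor> = nat \<lfloor>real m2 * frac (Im (P q))\<rfloor>"
    using pq(4) unfolding f_def by simp
  have G1: "\<bar>Re (P p - P q - b)\<bar> < 1/m1" unfolding e1 by (rule frac_close[OF m(1) f1])
  have G2: "\<bar>Im (P p - P q - b)\<bar> < 1/m2" unfolding e2 by (rule frac_close[OF m(2) f2])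
  have ne: "(x1,y1) \<noteq> (x2,y2)" using pq(3) p q by simp
  show ?thesis
    apply (rule exI[of _ x1], rule exI[of _ y1], rule exI[of _ x2], rule exI[of _ y2], rule exI[of _ b])
    unfolding rq using pq(1,2) p q bZ G1 G2 ne by blast
qed



lemma sq_le_int: "\<bar>a::int\<bar> \<le> k \<Longrightarrow> a^2 \<le> k^2"
  by (metis abs_le_square_iff abs_of_nonneg abs_ge_zero order_trans)

lemma cmod_le_from_int:
  assumes "(x::int)^2 + y^2 \<le> K" "real_of_int K \<le> \<tau>^2" "0 \<le> \<tau>"
  shows "cmod (Complex (of_int x) (of_int y)) \<le> \<tau>"
proof -
  have "real_of_int (x^2 + y^2) \<le> real_of_int K" using assms(1) by linarith
  hence "(real_of_int x)^2 + (real_of_int y)^2 \<le> \<tau>^2" using assms(2) by simp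
  thus ?thesis using assms(3) by (simp add: cmod_le_iff_sq)
qed

lemma cmod_le_from_parts:
  assumes "\<bar>Re z\<bar> \<le> e1" "\<bar>Im z\<bar> \<le> e2" "e1^2 + e2^2 \<le> c^2" "0 \<le> c"
  shows "cmod z \<le> c"
proof -
  have "(Re z)^2 \<le> e1^2" "(Im z)^2 \<le> e2^2" using assms(1,2)
    by (metis abs_le_square_iff abs_ge_zero abs_of_nonneg order_trans)+
  thus ?thesis using assms(3,4) by (simp add: cmod_le_iff_sq)
qed

lemma polyA: fixes N :: real assumes "N \<ge> 2"
  shows "(2*N^2+2) * (N^2 + (N+1)^2) \<le> 4 * N^2 * (N+1)^2"
proof -
  have "4 * N^2 * (N+1)^2 - (2*N^2+2) * (N^2 + (N+1)^2) = 4*N^3 - 2*N^2 - 4*N - 2"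
    by (simp add: algebra_simps power2_eq_square power3_eq_cube)
  moreover have "4*N^3 - 2*N^2 - 4*N - 2 \<ge> 0"
  proof -
    have "N^3 = N * N^2" by (simp add: power2_eq_square power3_eq_cube)
    moreover have "N * N^2 \<ge> 2 * N^2" using assms by (intro mult_right_mono) auto
    moreover have "N^2 = N * N" by (simp add: power2_eq_square)
    moreover have "N * N \<ge> 2 * N" using assms by (intro mult_right_mono) auto
    ultimately show ?thesis using assms by linarith
  qed
  ultimately show ?thesis by linarith
qed

lemma ineqA: fixes N T :: real assumes "N \<ge> 2" "0 < T" "T \<le> 2*N^2+2"
  shows "1/(N+1)^2 + 1/N^2 \<le> 4/T"
proof -
  have "T * (N^2 + (N+1)^2) \<le> (2*N^2+2) * (N^2 + (N+1)^2)"
    using assms by (intro mult_right_mono) auto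
  also have "\<dots> \<le> 4 * N^2 * (N+1)^2" by (rule polyA[OF assms(1)])
  finally have h: "T * (N^2 + (N+1)^2) \<le> 4 * (N^2 * (N+1)^2)" by simp
  have p: "N^2 * (N+1)^2 > 0" using assms by simp
  have "1/(N+1)^2 + 1/N^2 = (N^2 + (N+1)^2) / (N^2 * (N+1)^2)"
    using assms by (simp add: field_simps)
  also have "\<dots> \<le> 4 / T"
    using h p assms(2) by (simp add: frac_le_eq divide_le_eq le_divide_eq mult.commute)
  finally show ?thesis .
qed

lemma dirA:
  fixes n :: nat and T \<tau> :: real and \<beta> :: complex
  assumes n: "n \<ge> 2" and \<tau>: "\<tau> > 0" "T = \<tau>^2" and T: "2*(real n)^2 \<le> T" "T \<le> 2*(real n)^2+2"
  shows "\<exists>r b. r \<in> ZI \<and> b \<in> ZI \<and> r \<noteq> 0 \<and> cmod r \<le> \<tau> \<and> cmod (r*\<beta> - b) \<le> 2/\<tau>"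
proof -
  define Pts where "Pts = {0..int n} \<times> {0..int n}"
  have fin: "finite Pts" unfolding Pts_def by simp
  have e: "nat (int n + 1) = n+1" using nat_int[of "n+1"] by (simp only: of_nat_add of_nat_1)
  have cardP: "card Pts = (n+1)*(n+1)" unfolding Pts_def by (simp add: card_cartesian_product e del: Suc_eq_plus1)
  have "(n+1)*n < card Pts" unfolding cardP using n by simp
  from pigeon[OF fin this, of \<beta>] n obtain x1 y1 x2 y2 b where
    P: "(x1,y1) \<in> Pts" "(x2,y2) \<in> Pts" "(x1,y1) \<noteq> (x2,y2)" "b \<in> ZI"
    "\<bar>Re (Complex (of_int (x1-x2)) (of_int (y1-y2)) * \<beta> - b)\<bar> < 1/real (n+1)"
    "\<bar>Im (Complex (of_int (x1-x2)) (of_int (y1-y2)) * \<beta> - b)\<bar> < 1/real n" by auto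
  define r where "r = Complex (of_int (x1-x2)) (of_int (y1-y2))"
  have r0: "r \<noteq> 0" using P(3) unfolding r_def by (auto simp: Complex_eq_0)
  have "\<bar>x1-x2\<bar> \<le> int n" "\<bar>y1-y2\<bar> \<le> int n" using P(1,2) unfolding Pts_def by auto
  hence "(x1-x2)^2 \<le> (int n)^2" "(y1-y2)^2 \<le> (int n)^2" by (auto intro: sq_le_int)
  hence s1: "(x1-x2)^2 + (y1-y2)^2 \<le> 2 * (int n)^2" by linarith
  have s2: "real_of_int (2 * (int n)^2) \<le> \<tau>^2" using T \<tau> by simp
  have rt: "cmod r \<le> \<tau>" unfolding r_def using cmod_le_from_int[OF s1 s2] \<tau>(1) by simp
  have N2: "real n \<ge> 2" using n by simp
  have Tp: "0 < T" unfolding \<tau>(2) using \<tau>(1) by simp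
  have "1/(real n+1)^2 + 1/(real n)^2 \<le> 4/T" using ineqA[OF N2 Tp T(2)] .
  hence "(1/(real n+1))^2 + (1/real n)^2 \<le> (2/\<tau>)^2" using \<tau> by (simp add: power_divide)
  hence sq: "(1/real (n+1))^2 + (1/real n)^2 \<le> (2/\<tau>)^2" by (simp add: add.commute)
  have "cmod (r*\<beta> - b) \<le> 2/\<tau>" using \<tau>(1) unfolding r_def
    by (intro cmod_le_from_parts[OF less_imp_le[OF P(5)] less_imp_le[OF P(6)] sq]) auto
  moreover have "r \<in> ZI" unfolding r_def by (rule ZI_Complex)
  ultimately show ?thesis using r0 rt P(4) by blast
qed

lemma diffB:
  fixes n :: nat and x1 y1 x2 y2 :: int
  defines "Pts \<equiv> ({0..int n} \<times> {0..int n + 1}) - {(int n, int n+1), (0, int n+1)}"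
  assumes "(x1,y1) \<in> Pts" "(x2,y2) \<in> Pts"
  shows "(x1-x2)^2 + (y1-y2)^2 \<le> 2*(int n)^2 + 2"
proof (cases "\<bar>y1-y2\<bar> \<le> int n")
  case True
  have "\<bar>x1-x2\<bar> \<le> int n" using assms by auto
  hence "(x1-x2)^2 \<le> (int n)^2" "(y1-y2)^2 \<le> (int n)^2" using True by (auto intro: sq_le_int)
  thus ?thesis by linarith
next
  case False
  hence "(y1 = int n + 1 \<and> y2 = 0) \<or> (y1 = 0 \<and> y2 = int n + 1)" using assms by auto
  hence "\<bar>x1-x2\<bar> \<le> int n - 1" "\<bar>y1-y2\<bar> \<le> int n + 1" using assms by auto
  hence "(x1-x2)^2 \<le> (int n - 1)^2" "(y1-y2)^2 \<le> (int n + 1)^2" by (auto intro: sq_le_int)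
  moreover have "(int n - 1)^2 + (int n + 1)^2 = 2*(int n)^2 + 2" by (simp add: power2_eq_square algebra_simps)
  ultimately show ?thesis by linarith
qed

lemma dirB:
  fixes n :: nat and T \<tau> :: real and \<beta> :: complex
  assumes n: "n \<ge> 2" and \<tau>: "\<tau> > 0" "T = \<tau>^2" and T: "2*(real n)^2 + 2 \<le> T" "T \<le> 2*(real n + 1)^2"
  shows "\<exists>r b. r \<in> ZI \<and> b \<in> ZI \<and> r \<noteq> 0 \<and> cmod r \<le> \<tau> \<and> cmod (r*\<beta> - b) \<le> 2/\<tau>"
proof -
  define Pts where "Pts = ({0..int n} \<times> {0..int n + 1}) - {(int n, int n+1), (0, int n+1)}"
  have fin: "finite Pts" unfolding Pts_def by simp
  have e: "nat (int n + 1) = n+1" using nat_int[of "n+1"] by (simp only: of_nat_add of_nat_1)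
  have e2: "nat (2 + int n) = n+2" by (simp add: nat_add_distrib)
  have c0: "card ({0..int n} \<times> {0..int n + 1}) = (n+1)*(n+2)"
    by (simp add: card_cartesian_product e e2 del: Suc_eq_plus1)
  have sub: "{(int n, int n+1), (0, int n+1)} \<subseteq> {0..int n} \<times> {0..int n + 1}" by auto
  have c2: "card {(int n, int n+1), (0::int, int n+1)} = 2" using n by simp
  have cardP: "card Pts = (n+1)*(n+2) - 2" unfolding Pts_def
    using card_Diff_subset[OF _ sub] c0 c2 by simp
  have "(n+1)*(n+1) < card Pts" unfolding cardP using n by (simp add: algebra_simps)
  from pigeon[OF fin this, of \<beta>] obtain x1 y1 x2 y2 b where
    P: "(x1,y1) \<in> Pts" "(x2,y2) \<in> Pts" "(x1,y1) \<noteq> (x2,y2)" "b \<in> ZI"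
    "\<bar>Re (Complex (of_int (x1-x2)) (of_int (y1-y2)) * \<beta> - b)\<bar> < 1/real (n+1)"
    "\<bar>Im (Complex (of_int (x1-x2)) (of_int (y1-y2)) * \<beta> - b)\<bar> < 1/real (n+1)" by auto
  define r where "r = Complex (of_int (x1-x2)) (of_int (y1-y2))"
  have r0: "r \<noteq> 0" using P(3) unfolding r_def by (auto simp: Complex_eq_0)
  have s1: "(x1-x2)^2 + (y1-y2)^2 \<le> 2*(int n)^2 + 2" using diffB P(1,2) unfolding Pts_def by blast
  have s2: "real_of_int (2*(int n)^2 + 2) \<le> \<tau>^2" using T \<tau> by simp
  have rt: "cmod r \<le> \<tau>" unfolding r_def using cmod_le_from_int[OF s1 s2] \<tau>(1) by simp
  have Tp: "0 < T" unfolding \<tau>(2) using \<tau>(1) by simp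
  have "(1/real (n+1))^2 + (1/real (n+1))^2 = 2 / (real n + 1)^2" by (simp add: power_divide add.commute)
  also have "\<dots> \<le> 4 / T" using T(2) Tp by (simp add: divide_simps)
  also have "\<dots> = (2/\<tau>)^2" using \<tau> by (simp add: power_divide)
  finally have sq: "(1/real (n+1))^2 + (1/real (n+1))^2 \<le> (2/\<tau>)^2" .
  have "cmod (r*\<beta> - b) \<le> 2/\<tau>" using \<tau>(1) unfolding r_def
    by (intro cmod_le_from_parts[OF less_imp_le[OF P(5)] less_imp_le[OF P(6)] sq]) auto
  moreover have "r \<in> ZI" unfolding r_def by (rule ZI_Complex)
  ultimately show ?thesis using r0 rt P(4) by blast
qed

lemma round_close: "\<bar>x - of_int \<lfloor>x + 1/2\<rfloor>\<bar> \<le> (1/2::real)"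
proof -
  have "of_int \<lfloor>x + 1/2\<rfloor> \<le> x + 1/2" "x + 1/2 < of_int \<lfloor>x+1/2\<rfloor> + 1" by linarith+
  thus ?thesis unfolding abs_le_iff by linarith
qed

lemma dirichlet:
  fixes \<tau> :: real and \<beta> :: complex assumes t1: "\<tau> \<ge> 1"
  shows "\<exists>r b. r \<in> ZI \<and> b \<in> ZI \<and> r \<noteq> 0 \<and> cmod r \<le> \<tau> \<and> cmod (r*\<beta> - b) \<le> 2/\<tau>"
proof -
  define T where "T = \<tau>^2"
  have tp: "\<tau> > 0" using t1 by simp
  show ?thesis
  proof (cases "T \<le> 8")
    case True
    define b where "b = Complex (of_int \<lfloor>Re \<beta> + 1/2\<rfloor>) (of_int \<lfloor>Im \<beta> + 1/2\<rfloor>)"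
    have h1: "\<bar>Re (1*\<beta> - b)\<bar> \<le> 1/2" "\<bar>Im (1*\<beta> - b)\<bar> \<le> 1/2" unfolding b_def
      using round_close by simp_all
    have "(1/2)^2 + (1/2)^2 \<le> (2/\<tau>)^2"
      using True tp unfolding T_def by (simp add: power_divide divide_simps)
    hence "cmod (1*\<beta> - b) \<le> 2/\<tau>" using cmod_le_from_parts[OF h1] tp by simp
    moreover have "b \<in> ZI" unfolding b_def by (rule ZI_Complex)
    ultimately show ?thesis using t1 by (intro exI[of _ 1] exI[of _ b]) auto
  next
    case False
    define n where "n = nat \<lfloor>sqrt (T/2)\<rfloor>"
    have s2: "sqrt (T/2) \<ge> 2" using False by (simp add: real_le_rsqrt)
    hence fl: "\<lfloor>sqrt (T/2)\<rfloor> \<ge> 2" by (simp add: le_floor_iff)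
    have fl0: "0 \<le> \<lfloor>sqrt (T/2)\<rfloor>" using fl by linarith
    have nn: "real n = of_int \<lfloor>sqrt (T/2)\<rfloor>" unfolding n_def by (rule of_nat_nat[OF fl0])
    have n2: "n \<ge> 2" using fl unfolding n_def by linarith
    have a1: "real n \<le> sqrt (T/2)" "sqrt (T/2) < real n + 1" unfolding nn by linarith+
    have Tp: "T \<ge> 0" unfolding T_def by simp
    have "sqrt ((real n)^2) \<le> sqrt (T/2)" using a1(1) by simp
    hence "(real n)^2 \<le> T/2" by (simp only: real_sqrt_le_iff)
    hence lo: "2*(real n)^2 \<le> T" by simp
    have "sqrt (T/2) < sqrt ((real n + 1)^2)" using a1(2) by simp
    hence "T/2 < (real n + 1)^2" by (simp only: real_sqrt_less_iff)
    hence hi: "T \<le> 2*(real n + 1)^2" by simp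
    show ?thesis
    proof (cases "T \<le> 2*(real n)^2 + 2")
      case True
      show ?thesis by (rule dirA[OF n2 tp T_def lo True])
    next
      case False
      show ?thesis by (rule dirB[OF n2 tp T_def _ hi]) (use False in simp)
    qed
  qed
qed

lemma ZI_normsq_Ints: "r \<in> ZI \<Longrightarrow> (cmod r)^2 \<in> \<int>"
  unfolding cmod_power2 ZI_def by auto

definition gn :: "complex \<Rightarrow> nat" where "gn r = nat \<lfloor>(cmod r)^2\<rfloor>"

lemma gn_less: assumes "a \<in> ZI" "b \<in> ZI" "cmod a < cmod b" shows "gn a < gn b"
proof -
  obtain ka where ka: "(cmod a)^2 = of_int ka" using ZI_normsq_Ints[OF assms(1)] by (auto elim: Ints_cases)
  obtain kb where kb: "(cmod b)^2 = of_int kb" using ZI_normsq_Ints[OF assms(2)] by (auto elim: Ints_cases)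
  have "(cmod a)^2 < (cmod b)^2" using assms(3) by (simp add: power_strict_mono)
  hence "ka < kb" using ka kb by simp
  moreover have "0 \<le> ka" using ka by (metis of_int_0_le_iff zero_le_power2)
  ultimately show ?thesis unfolding gn_def ka kb by simp
qed

lemma dirichlet_coprime:
  fixes \<tau> :: real and \<beta> :: complex assumes t1: "\<tau> \<ge> 1"
  shows "\<exists>r b. r \<in> ZI \<and> b \<in> ZI \<and> gcoprime b r \<and> 1 \<le> cmod r \<and> cmod r \<le> \<tau> \<and>
     cmod (\<beta> - b/r) \<le> 2/(cmod r * \<tau>)"
proof -
  define G where "G = (\<lambda>r. r \<in> ZI \<and> r \<noteq> 0 \<and> cmod r \<le> \<tau> \<and> (\<exists>b\<in>ZI. cmod (r*\<beta> - b) \<le> 2/\<tau>))"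
  obtain r0 where "G r0" using dirichlet[OF t1, of \<beta>] unfolding G_def by blast
  from ex_has_least_nat[of G r0 gn, OF this] obtain r where
    r: "G r" and rmin: "\<And>y. G y \<Longrightarrow> gn r \<le> gn y" by blast
  from r obtain b where rZ: "r \<in> ZI" and r0: "r \<noteq> 0" and rt: "cmod r \<le> \<tau>" and
    b: "b \<in> ZI" "cmod (r*\<beta> - b) \<le> 2/\<tau>" unfolding G_def by blast
  have tp: "\<tau> > 0" using t1 by simp
  have cop: "gcoprime b r"
    unfolding gcoprime_def
  proof (intro ballI impI, elim conjE, rule ccontr)
    fix d assume d: "d \<in> ZI" "gdvd d b" "gdvd d r" "cmod d \<noteq> 1"
    obtain c2 where c2: "c2 \<in> ZI" "b = d * c2" using d(2) unfolding gdvd_def by auto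
    obtain c1 where c1: "c1 \<in> ZI" "r = d * c1" using d(3) unfolding gdvd_def by auto
    have d0: "d \<noteq> 0" using c1 r0 by auto
    have c10: "c1 \<noteq> 0" using c1 r0 by auto
    have dg: "cmod d > 1" using ZI_norm_ge1[OF d(1) d0] d(4) by simp
    have nr: "cmod r = cmod d * cmod c1" using c1 by (simp add: norm_mult)
    have c1r: "cmod c1 < cmod r" unfolding nr using dg c10 by simp
    have "c1 * \<beta> - c2 = (r*\<beta> - b) / d" using c1 c2 d0 by (simp add: field_simps)
    hence "cmod (c1 * \<beta> - c2) = cmod (r*\<beta> - b) / cmod d" by (simp add: norm_divide)
    also have "\<dots> \<le> cmod (r*\<beta> - b)" using dg mult_left_mono[of 1 "cmod d" "cmod (r*\<beta>-b)"]
      by (simp add: divide_le_eq)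
    finally have "cmod (c1 * \<beta> - c2) \<le> 2/\<tau>" using b(2) by linarith
    hence "G c1" unfolding G_def using c1(1) c10 c1r rt c2(1) by auto
    hence "gn r \<le> gn c1" by (rule rmin)
    moreover have "gn c1 < gn r" by (rule gn_less[OF c1(1) rZ c1r])
    ultimately show False by simp
  qed
  have r1: "1 \<le> cmod r" by (rule ZI_norm_ge1[OF rZ r0])
  have "\<beta> - b/r = (r*\<beta> - b) / r" using r0 by (simp add: field_simps)
  hence "cmod (\<beta> - b/r) = cmod (r*\<beta> - b) / cmod r" by (simp add: norm_divide)
  also have "\<dots> \<le> (2/\<tau>) / cmod r" by (rule divide_right_mono[OF b(2)]) simp
  also have "\<dots> = 2/(cmod r * \<tau>)" by (simp add: field_simps)
  finally show ?thesis using rZ b(1) cop r1 rt by blast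
qed



lemma rrs_unique:
  assumes "reduced_residue_system q R" "a1 \<in> R" "a2 \<in> R" "gdvd q (a1 - a2)"
  shows "a1 = a2"
proof -
  have a1: "a1 \<in> ZI" "gcoprime a1 q" using assms unfolding reduced_residue_system_def by auto
  hence "\<exists>!r. r \<in> R \<and> gdvd q (a1 - r)" using assms(1) unfolding reduced_residue_system_def by blast
  moreover have "gdvd q (a1 - a1)" unfolding gdvd_def by (auto intro!: bexI[of _ 0])
  ultimately show ?thesis using assms(2,3,4) by blast
qed

lemma K_le_P:
  assumes S: "S \<subseteq> cball 0 M \<inter> (ZI - {0})" and D: "0 < \<Delta>"
    and R: "\<And>q. q \<in> S \<Longrightarrow> reduced_residue_system q (R q)"
  shows "card {(a, q). q \<in> S \<and> a \<in> R q \<and> (\<exists>w\<in>ZI. cmod (cnj a / cnj q - \<alpha> - w) \<le> sqrt \<Delta>)}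
     \<le> card (Pset S \<Delta> (cnj \<alpha>))"
proof -
  define K where "K = {(a, q). q \<in> S \<and> a \<in> R q \<and> (\<exists>w\<in>ZI. cmod (cnj a / cnj q - \<alpha> - w) \<le> sqrt \<Delta>)}"
  define W where "W = (\<lambda>a q. SOME w. w \<in> ZI \<and> cmod (cnj a / cnj q - \<alpha> - w) \<le> sqrt \<Delta>)"
  define h where "h = (\<lambda>(a,q). (a - q * cnj (W a q), q))"
  have W: "W a q \<in> ZI" "cmod (cnj a / cnj q - \<alpha> - W a q) \<le> sqrt \<Delta>" if "(a,q) \<in> K" for a q
  proof -
    have "\<exists>w. w \<in> ZI \<and> cmod (cnj a / cnj q - \<alpha> - w) \<le> sqrt \<Delta>" using that unfolding K_def by auto
    from someI_ex[OF this] show "W a q \<in> ZI" "cmod (cnj a / cnj q - \<alpha> - W a q) \<le> sqrt \<Delta>"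
      unfolding W_def by auto
  qed
  have maps: "h ` K \<subseteq> Pset S \<Delta> (cnj \<alpha>)"
  proof
    fix t assume "t \<in> h ` K"
    then obtain a q where aq: "(a,q) \<in> K" and t: "t = (a - q * cnj (W a q), q)" unfolding h_def by auto
    have q: "q \<in> S" and a: "a \<in> R q" using aq unfolding K_def by auto
    have q0: "q \<noteq> 0" using q S by auto
    have rrs: "reduced_residue_system q (R q)" using R q by blast
    have aZ: "a \<in> ZI" and ac: "gcoprime a q" using rrs a unfolding reduced_residue_system_def by auto
    have wZ: "cnj (W a q) \<in> ZI" using W(1)[OF aq] by auto
    have "cnj ((a - q * cnj (W a q)) / q - cnj \<alpha>) = cnj a / cnj q - \<alpha> - W a q"
      using q0 by (simp add: field_simps)
    hence "cmod ((a - q * cnj (W a q)) / q - cnj \<alpha>) \<le> sqrt \<Delta>"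
      using W(2)[OF aq] by (metis complex_mod_cnj)
    moreover have "a - q * cnj (W a q) \<in> ZI" using aZ wZ q S by auto
    moreover have "gcoprime (a - q * cnj (W a q)) q" by (rule gcoprime_shift[OF ac wZ])
    ultimately show "t \<in> Pset S \<Delta> (cnj \<alpha>)" unfolding t Pset_def using q by auto
  qed
  have inj: "inj_on h K"
  proof (rule inj_onI)
    fix x y assume x: "x \<in> K" and y: "y \<in> K" and e: "h x = h y"
    obtain a1 q1 where x1: "x = (a1,q1)" by fastforce
    obtain a2 q2 where y1: "y = (a2,q2)" by fastforce
    have qq: "q1 = q2" using e unfolding x1 y1 h_def by simp
    have ee: "a1 - q1 * cnj (W a1 q1) = a2 - q1 * cnj (W a2 q2)" using e unfolding x1 y1 h_def qq by simp
    have "a1 - a2 = q1 * (cnj (W a1 q1) - cnj (W a2 q2))" using ee by (simp add: algebra_simps)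
    moreover have "cnj (W a1 q1) - cnj (W a2 q2) \<in> ZI" using W(1) x y x1 y1 by auto
    ultimately have "gdvd q1 (a1 - a2)" unfolding gdvd_def by blast
    moreover have "q1 \<in> S" "a1 \<in> R q1" "a2 \<in> R q1" using x y x1 y1 qq unfolding K_def by auto
    ultimately have "a1 = a2" using rrs_unique R by blast
    thus "x = y" using x1 y1 qq by simp
  qed
  have "card K \<le> card (Pset S \<Delta> (cnj \<alpha>))"
    by (rule card_inj_on_le[OF inj maps Pset_finite_bound(1)[OF S D]])
  thus ?thesis unfolding K_def .
qed

lemma gcoprime_1': "gcoprime 1 r"
  using gcoprime_1[of r] unfolding gcoprime_def by blast

lemma sup_le_bound:
  fixes f :: "'a \<Rightarrow> real"
  assumes "X \<noteq> {}" "\<And>x. x \<in> X \<Longrightarrow> f x \<le> c"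
  shows "(SUP x\<in>X. f x) \<le> c"
  using assms by (intro cSUP_least) auto

lemma sup_ge:
  fixes f :: "'a \<Rightarrow> real"
  assumes "x \<in> X" "\<And>x. x \<in> X \<Longrightarrow> f x \<le> c"
  shows "f x \<le> (SUP x\<in>X. f x)"
  using assms by (intro cSUP_upper) (auto intro!: bdd_aboveI2)

theorem lemma1:
  fixes Q :: nat and S :: "complex set" and R :: "complex \<Rightarrow> complex set"
    and \<Delta> \<tau> :: real
  assumes "S \<subseteq> cball 0 (sqrt (real Q)) \<inter> (ZI - {0})"
    and "0 < \<Delta>" and "\<Delta> \<le> 1/2"
    and "\<tau> = \<Delta> powr (-1/4)"
    and "\<And>q. q \<in> S \<Longrightarrow> reduced_residue_system q (R q)"
  shows "Kfun S R \<Delta> \<le> 4 *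
    (SUP r\<in>{r\<in>ZI. 1 \<le> cmod r \<and> cmod r \<le> \<tau>}.
      SUP b\<in>{b\<in>ZI. gcoprime b r}.
        SUP z\<in>{z. sqrt \<Delta> \<le> cmod z \<and> cmod z \<le> 2 / (cmod r * \<tau>)}.
          real (Pfun S \<Delta> (b / r + z)))"
proof -
  note S = assms(1) and D = assms(2)
  define s where "s = sqrt \<Delta>"
  define A where "A = {r\<in>ZI. 1 \<le> cmod r \<and> cmod r \<le> \<tau>}"
  define Bs where "Bs = (\<lambda>r. {b\<in>ZI. gcoprime b r})"
  define Zs where "Zs = (\<lambda>r. {z. sqrt \<Delta> \<le> cmod z \<and> cmod z \<le> 2 / (cmod r * \<tau>)})"
  define f where "f = (\<lambda>r b z. real (Pfun S \<Delta> (b / r + z)))"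
  define RHS where "RHS = (SUP r\<in>A. SUP b\<in>Bs r. SUP z\<in>Zs r. f r b z)"
  define Bd where "Bd = real (card (Dset (sqrt (real Q)) (sqrt \<Delta>)) * card S)"
  have s0: "s > 0" unfolding s_def using D by simp
  have s1: "s \<le> 1" unfolding s_def using assms(3) by simp
  have tau2: "\<tau>^2 * s = 1"
  proof -
    have tp': "\<tau> > 0" unfolding assms(4) using D by simp
    have "\<tau>^2 = \<tau> powr (real 2)" using powr_realpow[OF tp', of 2] by simp
    also have "\<dots> = \<Delta> powr (-1/4 * real 2)" unfolding assms(4) by (rule powr_powr)
    finally have a: "\<tau>^2 = \<Delta> powr (-1/2)" by simp
    have b: "s = \<Delta> powr (1/2)" unfolding s_def using D by (simp add: powr_half_sqrt)
    have "\<Delta> powr (-1/2) * \<Delta> powr (1/2) = \<Delta> powr (-1/2 + 1/2)" by (rule powr_add[symmetric])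
    also have "\<dots> = 1" using D by simp
    finally show ?thesis unfolding a b .
  qed
  have tp: "\<tau> > 0" unfolding assms(4) using D by simp
  have t1: "\<tau> \<ge> 1"
  proof (rule ccontr)
    assume "\<not> \<tau> \<ge> 1"
    hence "\<tau>^2 < 1" using tp by (simp add: power_less_one_iff abs_less_iff) 
    moreover have "\<tau>^2 * s \<le> \<tau>^2" using s1 by (simp add: mult_left_le)
    ultimately have "\<tau>^2 * s < 1" by linarith
    thus False using tau2 by simp
  qed
  have fB: "f r b z \<le> Bd" for r b z
    unfolding f_def Bd_def Pfun_Pset using Pset_finite_bound(2)[OF S D, of "b / r + z"] of_nat_mono by blast
  have Zne: "of_real s \<in> Zs r" if "r \<in> A" for r
  proof -
    have r: "cmod r \<le> \<tau>" "1 \<le> cmod r" using that unfolding A_def by auto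
    have "cmod r * \<tau> \<le> \<tau> * \<tau>" using r tp by (simp add: mult_right_mono)
    hence "cmod r * \<tau> * s \<le> \<tau> * \<tau> * s" using s0 by (simp add: mult_right_mono)
    hence "cmod r * \<tau> * s \<le> 1" using tau2 by (simp add: power2_eq_square)
    moreover have cp: "cmod r * \<tau> > 0" using mult_pos_pos[of "cmod r" \<tau>] r(2) tp by linarith
    ultimately have "s \<le> 1 / (cmod r * \<tau>)" by (simp add: le_divide_eq mult.commute)
    also have "\<dots> \<le> 2 / (cmod r * \<tau>)" using cp by (intro divide_right_mono) auto
    finally have "s \<le> 2 / (cmod r * \<tau>)" .
    thus ?thesis unfolding Zs_def s_def using s0 s_def by simp
  qed
  have Bne: "1 \<in> Bs r" for r unfolding Bs_def using gcoprime_1' by simp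
  have G_le: "(SUP z\<in>Zs r. f r b z) \<le> Bd" if "r \<in> A" for r b
    by (rule sup_le_bound) (use Zne[OF that] fB in auto)
  have F_le: "(SUP b\<in>Bs r. SUP z\<in>Zs r. f r b z) \<le> Bd" if "r \<in> A" for r
    by (rule sup_le_bound) (use Bne G_le[OF that] in auto)
  have upper: "f r b z \<le> RHS" if "r \<in> A" "b \<in> Bs r" "z \<in> Zs r" for r b z
  proof -
    have "f r b z \<le> (SUP z\<in>Zs r. f r b z)" using that(3) fB by (rule sup_ge)
    also have "\<dots> \<le> (SUP b\<in>Bs r. SUP z\<in>Zs r. f r b z)" using that(2) G_le[OF that(1)] by (rule sup_ge)
    also have "\<dots> \<le> RHS" unfolding RHS_def using that(1) F_le by (rule sup_ge)
    finally show ?thesis .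
  qed
  have A1: "1 \<in> A" unfolding A_def using t1 by simp
  have RHS0: "0 \<le> RHS" using upper[OF A1 Bne Zne[OF A1]] unfolding f_def by linarith
  have Pbound: "real (card (Pset S \<Delta> \<beta>)) \<le> 4 * RHS" for \<beta>
  proof -
    obtain r b where rb: "r \<in> ZI" "b \<in> ZI" "gcoprime b r" "1 \<le> cmod r" "cmod r \<le> \<tau>"
      "cmod (\<beta> - b/r) \<le> 2/(cmod r * \<tau>)" using dirichlet_coprime[OF t1, of \<beta>] by blast
    have rA: "r \<in> A" unfolding A_def using rb by simp
    have bB: "b \<in> Bs r" unfolding Bs_def using rb by simp
    define v where "v = \<beta> - b/r"
    have bv: "\<beta> = b/r + v" unfolding v_def by simp
    have Zs_iff: "z \<in> Zs r" if "cmod z = s" for z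
      using Zne[OF rA] that unfolding Zs_def s_def by simp
    show ?thesis
    proof (cases "s \<le> cmod v")
      case True
      have "v \<in> Zs r" unfolding Zs_def using True rb(6) unfolding v_def s_def by simp
      hence "f r b v \<le> RHS" using upper[OF rA bB] by blast
      hence "real (card (Pset S \<Delta> \<beta>)) \<le> RHS" unfolding f_def Pfun_Pset bv .
      thus ?thesis using RHS0 by linarith
    next
      case False
      hence vs: "cmod v < s" by simp
      define u where "u = (if v = 0 then 1 else v / cmod v)"
      have u1: "cmod u = 1" unfolding u_def by (auto simp: norm_divide)
      define Z4 where "Z4 = {of_real s * u, \<i> * of_real s * u, -(of_real s * u), -(\<i> * of_real s * u)}"
      have Z4s: "z \<in> Zs r" if "z \<in> Z4" for z
        using that u1 s0 unfolding Z4_def by (auto intro!: Zs_iff simp: norm_mult)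
      have fin4: "finite Z4" unfolding Z4_def by simp
      have c4: "card Z4 \<le> 4"
      proof -
        have "Z4 = set [of_real s * u, \<i> * of_real s * u, -(of_real s * u), -(\<i> * of_real s * u)]"
          unfolding Z4_def by simp
        thus ?thesis using card_length[of "[of_real s * u, \<i> * of_real s * u, -(of_real s * u), -(\<i> * of_real s * u)]"]
          by simp
      qed
      have cover: "Pset S \<Delta> \<beta> \<subseteq> (\<Union>z\<in>Z4. Pset S \<Delta> (b/r + z))"
      proof
        fix t assume t: "t \<in> Pset S \<Delta> \<beta>"
        then obtain a q where aq: "t = (a,q)" "a \<in> ZI" "q \<in> S" "gcoprime a q" "cmod (a/q - \<beta>) \<le> s"
          unfolding Pset_def s_def by auto
        have "cmod (a/q - (b/r + v)) \<le> s" using aq(5) bv by simp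
        from flower[OF s0 vs this] obtain z where z: "z \<in> Z4" "cmod (a/q - (b/r + z)) \<le> s"
          unfolding Z4_def u_def by blast
        thus "t \<in> (\<Union>z\<in>Z4. Pset S \<Delta> (b/r + z))" using aq unfolding Pset_def s_def by auto
      qed
      have "card (Pset S \<Delta> \<beta>) \<le> card (\<Union>z\<in>Z4. Pset S \<Delta> (b/r + z))"
        by (rule card_mono[OF _ cover]) (use fin4 Pset_finite_bound(1)[OF S D] in auto)
      also have "\<dots> \<le> (\<Sum>z\<in>Z4. card (Pset S \<Delta> (b/r + z)))" by (rule card_UN_le[OF fin4])
      finally have "real (card (Pset S \<Delta> \<beta>)) \<le> (\<Sum>z\<in>Z4. f r b z)"
        unfolding f_def Pfun_Pset by (metis of_nat_le_iff of_nat_sum)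
      also have "\<dots> \<le> (\<Sum>z\<in>Z4. RHS)" by (rule sum_mono) (use upper[OF rA bB] Z4s in auto)
      also have "\<dots> = real (card Z4) * RHS" by simp
      also have "\<dots> \<le> 4 * RHS" using c4 RHS0 by (intro mult_right_mono) auto
      finally show ?thesis .
    qed
  qed
  have "Kfun S R \<Delta> \<le> 4 * RHS"
    unfolding Kfun_def
  proof (rule cSUP_least)
    fix \<alpha> :: complex
    have "card {(a, q). q \<in> S \<and> a \<in> R q \<and> (\<exists>w\<in>ZI. cmod (cnj a / cnj q - \<alpha> - w) \<le> sqrt \<Delta>)}
     \<le> card (Pset S \<Delta> (cnj \<alpha>))" by (rule K_le_P[OF S D assms(5)])
    thus "real (card {(a, q). q \<in> S \<and> a \<in> R q \<and> (\<exists>w\<in>ZI. cmod (cnj a / cnj q - \<alpha> - w) \<le> sqrt \<Delta>)}) \<le> 4 * RHS"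
      using Pbound[of "cnj \<alpha>"] by linarith
  qed simp
  thus ?thesis unfolding RHS_def A_def Bs_def Zs_def f_def .
qed

end
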